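(* Let $\ket{GHZ_3}=\frac{1}{\sqrt{3}}(\ket{000}+\ket{111}+\ket{222})\in\mathbb{C}^3\otimes\mathbb{C}^3\otimes\mathbb{C}^3$, shared among three parties $A,B,C$. Then for every normalized three-qubit pure state $\ket{\phi}\in\mathbb{C}^2\otimes\mathbb{C}^2\otimes\mathbb{C}^2$ (with the $i$-th qubit held by the $i$-th party), $\ket{GHZ_3}$ can be transformed into $\ket{\phi}$ by LOCC; i.e., $\ket{GHZ_3}$ is a common resource for the set of all three-qubit pure states.
   Context: An LOCC transformation is one implementable by local quantum operations of the three parties together with classical communication among them; "$\ket{\psi}$ can be transformed into $\ket{\phi}$ by LOCC" means there is such a protocol producing $\ket{\phi}$ from $\ket{\psi}$ with probability one (local embeddings of $\mathbb{C}^2$ into $\mathbb{C}^3$ are allowed, i.e. the output qubits are regarded as two-dimensional subspaces of the local spaces). A common resource for a set $S$ of states is a state that can be transformed by LOCC into every state of $S$. *)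

theory Defs
  imports Complex_Main "HOL-Library.Numeral_Type"
begin

text \<open>Tripartite pure states (unnormalised) on C^3 (x) C^3 (x) C^3, indexed by the
  finite type 3; three-qubit states on C^2 (x) C^2 (x) C^2, indexed by the type 2.
  A local operator on C^3 is a 3x3 complex matrix M, with M i j the (i,j) entry.\<close>

type_synonym qutrit_state = "3 \<Rightarrow> 3 \<Rightarrow> 3 \<Rightarrow> complex"
type_synonym qubit_state = "2 \<Rightarrow> 2 \<Rightarrow> 2 \<Rightarrow> complex"
type_synonym op3 = "3 \<Rightarrow> 3 \<Rightarrow> complex"

definition GHZ3 :: qutrit_state where
  "GHZ3 a b c = (if a = b \<and> b = c then complex_of_real (1 / sqrt 3) else 0)"

definition normalized_qubit :: "qubit_state \<Rightarrow> bool" where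
  "normalized_qubit \<phi> \<longleftrightarrow> (\<Sum>x\<in>UNIV. \<Sum>y\<in>UNIV. \<Sum>z\<in>UNIV. (cmod (\<phi> x y z))\<^sup>2) = 1"

text \<open>Standard local embedding of C^2 into C^3: basis vector |i> goes to |i>, i = 0,1.\<close>
definition emb :: "2 \<Rightarrow> 3" where
  "emb x = of_int (Rep_bit0 x)"

definition embed_state :: "qubit_state \<Rightarrow> qutrit_state" where
  "embed_state \<phi> a b c =
     (\<Sum>x\<in>UNIV. \<Sum>y\<in>UNIV. \<Sum>z\<in>UNIV.
        if a = emb x \<and> b = emb y \<and> c = emb z then \<phi> x y z else 0)"

text \<open>Local operator M applied by party p (0 = A, 1 = B, 2 = C).\<close>
definition apply_local :: "nat \<Rightarrow> op3 \<Rightarrow> qutrit_state \<Rightarrow> qutrit_state" where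
  "apply_local p M \<psi> a b c =
     (if p = 0 then (\<Sum>a'\<in>UNIV. M a a' * \<psi> a' b c)
      else if p = 1 then (\<Sum>b'\<in>UNIV. M b b' * \<psi> a b' c)
      else (\<Sum>c'\<in>UNIV. M c c' * \<psi> a b c'))"

definition kraus_complete :: "op3 list \<Rightarrow> bool" where
  "kraus_complete Ms \<longleftrightarrow>
     (\<forall>j l. (\<Sum>M\<leftarrow>Ms. \<Sum>i\<in>UNIV. cnj (M i j) * M i l) = (if j = l then 1 else 0))"

text \<open>Finite-round LOCC protocol trees on (unnormalised) branch states: at each node one
  party performs a local measurement whose outcome is broadcast, and the protocol continues
  on every branch.  A leaf is successful if its branch state is proportional to the target
  (the zero vector, i.e. probability-zero branches, included).\<close>
inductive locc_tree :: "(qutrit_state \<Rightarrow> bool) \<Rightarrow> qutrit_state \<Rightarrow> bool" for Good where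
  leaf: "Good \<psi> \<Longrightarrow> locc_tree Good \<psi>"
| step: "p < 3 \<Longrightarrow> kraus_complete Ms \<Longrightarrow>
         (\<And>M. M \<in> set Ms \<Longrightarrow> locc_tree Good (apply_local p M \<psi>)) \<Longrightarrow> locc_tree Good \<psi>"

definition LOCC_transformable :: "qutrit_state \<Rightarrow> qutrit_state \<Rightarrow> bool" where
  "LOCC_transformable \<psi> \<phi> \<longleftrightarrow> locc_tree (\<lambda>\<chi>. \<exists>c::complex. \<chi> = (\<lambda>a b d. c * \<phi> a b d)) \<psi>"

end

theory Submission
  imports Defs
begin

lemma ex2: "(x::2) = 0 \<or> x = 1"
proof (rule bit0.cases[of x])
  fix z assume a: "x = of_int z" "0 \<le> z" "z < int CARD(1 bit0)"
  then have "z = 0 \<or> z = 1" by auto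
  then show ?thesis using a by auto
qed
lemma ex3: "(x::3) = 0 \<or> x = 1 \<or> x = 2"
proof (rule bit1.cases[of x])
  fix z assume a: "x = of_int z" "0 \<le> z" "z < int CARD(1 bit1)"
  then have "z = 0 \<or> z = 1 \<or> z = 2" by auto
  then show ?thesis using a by auto
qed
lemma U2: "(UNIV::2 set) = {0,1}" using ex2 by auto
lemma U3: "(UNIV::3 set) = {0,1,2}" using ex3 by auto
lemma d2: "(0::2) \<noteq> 1" by simp
lemma d3[simp]: "(0::3) \<noteq> 1" "(0::3) \<noteq> 2" "(1::3) \<noteq> 2" "(1::3) \<noteq> 0" "(2::3) \<noteq> 0" "(2::3) \<noteq> 1" by simp_all
lemma s2: "(\<Sum>x\<in>UNIV. f (x::2)) = f 0 + f 1" unfolding U2 using d2 by (subst sum.insert) auto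
lemma s3: "(\<Sum>x\<in>UNIV. f (x::3)) = f 0 + f 1 + f 2" unfolding U3 using d3 by (simp add: add.assoc)
lemma emb01[simp]: "emb 0 = 0" "emb 1 = 1" unfolding emb_def by (simp_all add: bit0.Rep_0 bit0.Rep_1)

type_synonym mat3 = "3 \<Rightarrow> 3 \<Rightarrow> complex"
definition tri :: "mat3 \<Rightarrow> mat3 \<Rightarrow> mat3 \<Rightarrow> qutrit_state" where
  "tri X Y Z a b c = (\<Sum>k\<in>UNIV. X a k * Y b k * Z c k)"
definition mm :: "mat3 \<Rightarrow> mat3 \<Rightarrow> mat3" where
  "mm M X a k = (\<Sum>m\<in>UNIV. M a m * X m k)"
definition idm :: mat3 where "idm a k = (if a = k then 1 else 0)"
definition scal :: "complex \<Rightarrow> mat3 \<Rightarrow> mat3" where "scal c M a k = c * M a k"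
definition W :: "3 \<Rightarrow> (3 \<Rightarrow> complex) \<Rightarrow> mat3" where
  "W s f m k = (if m = k + s then f k else 0)"

lemma apply0: "apply_local 0 M (tri X Y Z) = tri (mm M X) Y Z"
  unfolding apply_local_def tri_def mm_def
  by (auto simp: sum_distrib_left sum_distrib_right mult.assoc intro!: ext) (subst sum.swap, simp)

lemma apply1: "apply_local 1 M (tri X Y Z) = tri X (mm M Y) Z"
  unfolding apply_local_def tri_def mm_def
  apply (auto simp: sum_distrib_left sum_distrib_right intro!: ext) 
  apply (subst sum.swap) apply (auto intro!: sum.cong simp: ac_simps) done

lemma apply2: "apply_local 2 M (tri X Y Z) = tri X Y (mm M Z)"
  unfolding apply_local_def tri_def mm_def
  apply (auto simp: sum_distrib_left sum_distrib_right intro!: ext) 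
  apply (subst sum.swap) apply (auto intro!: sum.cong simp: ac_simps) done

lemma mm_W: "mm X (W s f) a k = X a (k + s) * f k"
  unfolding mm_def W_def by (simp add: if_distrib cong: if_cong)

lemma shift3: "(\<Sum>k\<in>UNIV. h (k + s)) = (\<Sum>k\<in>(UNIV::3 set). h k)"
  by (rule sum.reindex_bij_witness[where i="\<lambda>k. k - s" and j="\<lambda>k. k + s"]) auto

lemma sym_tri:
  assumes "\<And>k. f1 k * f2 k * f3 k = 1"
  shows "tri (mm X (W s f1)) (mm Y (W s f2)) (mm Z (W s f3)) = tri X Y Z"
proof (intro ext)
  fix a b c
  have "tri (mm X (W s f1)) (mm Y (W s f2)) (mm Z (W s f3)) a b c
     = (\<Sum>k\<in>UNIV. X a (k+s) * Y b (k+s) * Z c (k+s) * (f1 k * f2 k * f3 k))"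
    unfolding tri_def mm_W by (auto intro!: sum.cong simp: ac_simps)
  also have "\<dots> = (\<Sum>k\<in>UNIV. X a (k+s) * Y b (k+s) * Z c (k+s))" using assms by simp
  also have "\<dots> = tri X Y Z a b c" unfolding tri_def by (rule shift3)
  finally show "tri (mm X (W s f1)) (mm Y (W s f2)) (mm Z (W s f3)) a b c = tri X Y Z a b c" .
qed

lemma delta1: "(\<Sum>m\<in>(UNIV::3 set). (if a = m then 1 else 0) * g m) = (g a::complex)"
proof -
  have eq: "(\<lambda>m. (if a = m then 1 else 0) * g m) = (\<lambda>m. if a = m then g m else 0)" by auto
  show ?thesis unfolding eq by simp
qed
lemma delta2: "(\<Sum>m\<in>(UNIV::3 set). g m * (if m = a then 1 else 0)) = (g a::complex)"
proof -
  have eq: "(\<lambda>m. g m * (if m = a then 1 else 0)) = (\<lambda>m. if a = m then g m else 0)" by auto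
  show ?thesis unfolding eq by simp
qed
lemma mm_idm_left[simp]: "mm idm M = M" unfolding mm_def idm_def by (auto intro!: ext simp: delta1)
lemma mm_idm_right[simp]: "mm M idm = M" unfolding mm_def idm_def by (auto intro!: ext simp: if_distrib cong: if_cong)
lemma mm_scal_left: "mm (scal c M) N = scal c (mm M N)" unfolding mm_def scal_def by (auto intro!: ext simp: sum_distrib_left ac_simps)
lemma mm_scal_right: "mm M (scal c N) = scal c (mm M N)" unfolding mm_def scal_def by (auto intro!: ext simp: sum_distrib_left ac_simps)
lemma W0_1: "W 0 (\<lambda>_. 1) = idm" unfolding W_def idm_def by (auto intro!: ext)

definition GoodS where "GoodS \<psi> = (\<lambda>\<chi>::qutrit_state. \<exists>c::complex. \<chi> = (\<lambda>a b d. c * \<psi> a b d))"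

definition unitary3 :: "mat3 \<Rightarrow> bool" where
  "unitary3 U \<longleftrightarrow> (\<forall>j l. (\<Sum>i\<in>UNIV. cnj (U i j) * U i l) = (if j = l then 1 else 0))"

lemma unit_step:
  assumes "unitary3 U" "p < 3" "locc_tree G (apply_local p U \<psi>)"
  shows "locc_tree G \<psi>"
  apply (rule locc_tree.step[of p "[U]"])
  using assms unfolding unitary3_def kraus_complete_def by auto

lemma unitary_W: assumes "\<And>k. cnj (f k) * f k = 1" shows "unitary3 (W s f)"
  unfolding unitary3_def
proof (intro allI)
  fix j l
  have eq: "(\<lambda>i. cnj (W s f i j) * W s f i l) = (\<lambda>i. if i = j + s then (if j = l then cnj (f j) * f l else 0) else 0)"
    unfolding W_def by auto
  show "(\<Sum>i\<in>UNIV. cnj (W s f i j) * W s f i l) = (if j = l then 1 else 0)" unfolding eq using assms by simp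
qed


definition om :: complex where "om = Complex (-1/2) (sqrt 3 / 2)"
lemma om_sq: "om * om = cnj om"
  by (simp add: om_def complex_eq_iff field_simps power2_eq_square)
lemma om_n: "cnj om * om = 1"
  by (simp add: om_def complex_eq_iff field_simps power2_eq_square)
lemma om_sum: "1 + om + cnj om = 0"
  by (simp add: om_def complex_eq_iff)
lemma om_sq2: "cnj om * cnj om = om"
  by (metis complex_cnj_cnj complex_cnj_mult om_sq)

definition chi :: "3 \<Rightarrow> 3 \<Rightarrow> complex" where
  "chi j k = (if j = 0 \<or> k = 0 then 1 else if j = k then om else cnj om)"

lemma chi_unit: "cnj (chi j k) * chi j k = 1"
  unfolding chi_def using om_n by (auto simp: mult.commute)

lemma chi_orth: "(\<Sum>j\<in>UNIV. cnj (chi j k) * chi j l) = (if k = l then 3 else 0)"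
proof -
  have "(\<Sum>j\<in>UNIV. cnj (chi j k) * chi j l) = cnj (chi 0 k) * chi 0 l + cnj (chi 1 k) * chi 1 l + cnj (chi 2 k) * chi 2 l"
    by (rule s3)
  also have "\<dots> = (if k = l then 3 else 0)"
    using ex3[of k] ex3[of l] om_n om_sum om_sq om_sq2
    by (auto simp: chi_def mult.commute add_ac) 
  finally show ?thesis .
qed

lemma suml3: "sum_list (map f [0,1,2::3]) = (\<Sum>j\<in>UNIV. f j)"
  by (simp add: s3 add.assoc)

definition kq :: "mat3 \<Rightarrow> 3 \<Rightarrow> 3 \<Rightarrow> complex" where "kq M j l = (\<Sum>i\<in>UNIV. cnj (M i j) * M i l)"

lemma kraus_iff: "kraus_complete Ms \<longleftrightarrow> (\<forall>j l. (\<Sum>M\<leftarrow>Ms. kq M j l) = (if j = l then 1 else 0))"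
  unfolding kraus_complete_def kq_def by simp

definition gam :: complex where "gam = complex_of_real (1 / sqrt 3)"
lemma gam_sq: "cnj gam * gam * 3 = 1"
proof -
  have r: "(1/sqrt 3) * (1/sqrt 3) * 3 = (1::real)" by simp
  have "cnj gam * gam * 3 = complex_of_real ((1/sqrt 3) * (1/sqrt 3) * 3)"
    unfolding gam_def by (simp flip: of_real_mult)
  then show ?thesis using r by simp
qed

definition Lc :: "mat3 \<Rightarrow> mat3 list" where
  "Lc C = map (\<lambda>j. scal gam (mm C (W 0 (chi j)))) [0,1,2]"

lemma kraus_C:
  assumes "\<And>k. kq C k k = 1" and "\<And>k l. k \<noteq> l \<Longrightarrow> True"
  shows "kraus_complete (Lc C)"
  unfolding kraus_iff Lc_def
proof (intro allI)
  fix k l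
  have "(\<Sum>M\<leftarrow>map (\<lambda>j. scal gam (mm C (W 0 (chi j)))) [0,1,2]. kq M k l)
      = (\<Sum>j\<in>UNIV. kq (scal gam (mm C (W 0 (chi j)))) k l)"
    by (simp add: suml3[of "\<lambda>j. kq (scal gam (mm C (W 0 (chi j)))) k l", simplified])
  also have "\<dots> = (\<Sum>j\<in>UNIV. (cnj gam * gam) * kq C k l * (cnj (chi j k) * chi j l))"
    unfolding kq_def scal_def mm_W by (auto intro!: sum.cong simp: sum_distrib_left sum_distrib_right ac_simps)
  also have "\<dots> = (cnj gam * gam) * kq C k l * (if k = l then 3 else 0)"
    by (simp add: sum_distrib_left[symmetric] chi_orth)
  also have "\<dots> = (if k = l then 1 else 0)" using assms(1)[of k] gam_sq by auto
  finally show "(\<Sum>M\<leftarrow>map (\<lambda>j. scal gam (mm C (W 0 (chi j)))) [0,1,2]. kq M k l) = (if k = l then 1 else 0)" .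
qed


definition tB :: "mat3 \<Rightarrow> real" where "tB B = (\<Sum>i\<in>UNIV. \<Sum>k\<in>UNIV. (cmod (B i k))\<^sup>2)"
definition bet :: "mat3 \<Rightarrow> complex" where "bet B = complex_of_real (1 / sqrt (3 * tB B))"

lemma bet_sq: assumes "tB B > 0" shows "cnj (bet B) * bet B * 3 * complex_of_real (tB B) = 1"
proof -
  have r: "(1/sqrt (3 * tB B)) * (1/sqrt (3 * tB B)) * 3 * tB B = (1::real)" using assms by simp
  have "cnj (bet B) * bet B * 3 * complex_of_real (tB B) = complex_of_real ((1/sqrt (3 * tB B)) * (1/sqrt (3 * tB B)) * 3 * tB B)"
    unfolding bet_def by (simp only: complex_cnj_complex_of_real of_real_mult of_real_numeral)
  then show ?thesis using r by simp
qed

definition Lb :: "mat3 \<Rightarrow> mat3 list" where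
  "Lb B = concat (map (\<lambda>a. map (\<lambda>j. scal (bet B) (mm B (W a (chi j)))) [0,1,2]) [0,1,2])"

lemma sum_concat3: "(\<Sum>M\<leftarrow>concat (map (\<lambda>a. map (\<lambda>j. F a j) [0,1,2::3]) [0,1,2::3]). g M) = (\<Sum>a\<in>UNIV. \<Sum>j\<in>UNIV. g (F a j))"
  by (simp add: s3 add_ac)

lemma trB: "(\<Sum>a\<in>UNIV. \<Sum>i\<in>UNIV. cnj (B i a) * B i a) = complex_of_real (tB B)"
  unfolding tB_def of_real_sum by (subst sum.swap) (simp add: complex_norm_square mult.commute del: of_real_power)

lemma kraus_B:
  assumes "tB B > 0"
  shows "kraus_complete (Lb B)"
  unfolding kraus_iff Lb_def sum_concat3
proof (intro allI)
  fix k l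
  let ?b = "bet B"
  have "(\<Sum>a\<in>UNIV. \<Sum>j\<in>UNIV. kq (scal ?b (mm B (W a (chi j)))) k l)
      = (\<Sum>a\<in>UNIV. \<Sum>j\<in>UNIV. (cnj ?b * ?b) * (\<Sum>i\<in>UNIV. cnj (B i (k+a)) * B i (l+a)) * (cnj (chi j k) * chi j l))"
    unfolding kq_def scal_def mm_W by (auto intro!: sum.cong simp: sum_distrib_left sum_distrib_right ac_simps)
  also have "\<dots> = (\<Sum>a\<in>UNIV. (cnj ?b * ?b) * (\<Sum>i\<in>UNIV. cnj (B i (k+a)) * B i (l+a)) * (if k = l then 3 else 0))"
    by (simp add: sum_distrib_left[symmetric] chi_orth)
  also have "\<dots> = (if k = l then 1 else 0)"
  proof (cases "k = l")
    case True
    have "(\<Sum>a\<in>UNIV. (\<Sum>i\<in>UNIV. cnj (B i (a+l)) * B i (a+l))) = (\<Sum>a\<in>UNIV. \<Sum>i\<in>UNIV. cnj (B i a) * B i a)"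
      by (rule shift3)
    then have "(\<Sum>a\<in>UNIV. (\<Sum>i\<in>UNIV. cnj (B i (l+a)) * B i (l+a))) = complex_of_real (tB B)"
      by (simp add: trB add.commute)
    then show ?thesis using True bet_sq[OF assms]
      by (simp add: sum_distrib_right[symmetric] sum_distrib_left[symmetric] ac_simps)
  qed simp
  finally show "(\<Sum>a\<in>UNIV. \<Sum>j\<in>UNIV. kq (scal ?b (mm B (W a (chi j)))) k l) = (if k = l then 1 else 0)" .
qed

definition eps :: "3 \<Rightarrow> complex" where "eps k = (if k = 0 then 1 else -1)"
definition alp :: complex where "alp = complex_of_real (1 / sqrt 2)"
lemma alp_sq: "cnj alp * alp * 2 = 1"
proof -
  have r: "(1/sqrt 2) * (1/sqrt 2) * 2 = (1::real)" by simp
  have "cnj alp * alp * 2 = complex_of_real ((1/sqrt 2) * (1/sqrt 2) * 2)"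
    unfolding alp_def by (simp flip: of_real_mult)
  then show ?thesis using r by simp
qed

definition La :: "mat3 \<Rightarrow> mat3 list" where
  "La A = [scal alp A, scal alp (mm A (W 0 eps))]"

lemma kraus_A:
  assumes "\<And>k. kq A k k = 1" "kq A 1 2 = 0" "kq A 2 1 = 0"
  shows "kraus_complete (La A)"
  unfolding kraus_iff La_def
proof (intro allI)
  fix k l
  have "(\<Sum>M\<leftarrow>[scal alp A, scal alp (mm A (W 0 eps))]. kq M k l) = (cnj alp * alp) * kq A k l * (1 + cnj (eps k) * eps l)"
    unfolding kq_def scal_def mm_W by (simp add: sum_distrib_left sum.distrib[symmetric] algebra_simps)
  also have "\<dots> = (if k = l then 1 else 0)"
    using ex3[of k] ex3[of l] assms alp_sq by (auto simp: eps_def)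
  finally show "(\<Sum>M\<leftarrow>[scal alp A, scal alp (mm A (W 0 eps))]. kq M k l) = (if k = l then 1 else 0)" .
qed


lemma GHZ_tri: "GHZ3 = tri (scal gam idm) idm idm"
proof (intro ext)
  fix a b c
  have eq: "(\<lambda>k. scal gam idm a k * idm b k * idm c k) = (\<lambda>k. if a = k then (if b = a \<and> c = a then gam else 0) else 0)"
    by (auto simp: scal_def idm_def)
  show "GHZ3 a b c = tri (scal gam idm) idm idm a b c"
    unfolding tri_def eq by (auto simp: GHZ3_def gam_def)
qed

lemma tri_scal: "tri (scal x A) (scal y B) (scal z C) a b c = x * y * z * (\<Sum>k\<in>UNIV. A a k * B b k * C c k)"
  unfolding tri_def scal_def by (simp add: sum_distrib_left ac_simps)

lemma mmW_K: "mm (W s f) (scal g idm) = mm (scal g idm) (W s f)"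
  by (simp add: mm_scal_left mm_scal_right)

lemma unitary_W_cnj: "unitary3 (W s (\<lambda>k. cnj (chi j k)))"
  by (rule unitary_W) (metis chi_unit complex_cnj_cnj mult.commute)

lemma unitary_W1: "unitary3 (W s (\<lambda>k. 1))"
  by (rule unitary_W) simp

lemma protocol:
  assumes A1: "\<And>k. kq A k k = 1" and A2: "kq A 1 2 = 0" "kq A 2 1 = 0"
    and C1: "\<And>k. kq C k k = 1"
    and V1: "unitary3 V" and V2: "mm V B = mm B (W 0 eps)"
    and B1: "tB B > 0"
    and D: "\<And>a b c. (\<Sum>k\<in>UNIV. A a k * B b k * C c k) = \<psi> a b c"
  shows "locc_tree (GoodS \<psi>) GHZ3"
proof -
  define G where "G = GoodS \<psi>"
  define K where "K = scal gam idm"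
  define B' where "B' = scal (bet B) B"
  define C' where "C' = scal gam C"
  have leaf: "locc_tree G (tri (mm (scal alp A) K) B' C')"
  proof (rule locc_tree.leaf)
    have "mm (scal alp A) K = scal (alp * gam) A" unfolding K_def
      by (simp add: mm_scal_left mm_scal_right) (auto simp: scal_def intro!: ext)
    then show "G (tri (mm (scal alp A) K) B' C')"
      unfolding G_def GoodS_def B'_def C'_def
      by (intro exI[of _ "alp * gam * bet B * gam"]) (auto intro!: ext simp: tri_scal D)
  qed
  have st3: "locc_tree G (tri K B' C')"
  proof (rule locc_tree.step[of 0 "La A"])
    show "kraus_complete (La A)" by (rule kraus_A) (auto simp: A1 A2)
    fix M assume "M \<in> set (La A)"
    then have "M = scal alp A \<or> M = scal alp (mm A (W 0 eps))" unfolding La_def by auto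
    then show "locc_tree G (apply_local 0 M (tri K B' C'))"
    proof
      assume "M = scal alp A" then show ?thesis using leaf by (simp add: apply0)
    next
      assume M: "M = scal alp (mm A (W 0 eps))"
      show ?thesis
      proof (rule unit_step[OF V1, of 1])
        have e1: "mm M K = mm (mm (scal alp A) K) (W 0 eps)" unfolding M K_def
          by (simp add: mm_scal_left mm_scal_right)
        have e2: "mm V B' = mm B' (W 0 eps)" unfolding B'_def
          by (simp add: mm_scal_left mm_scal_right V2)
        have e3: "C' = mm C' (W 0 (\<lambda>_. 1))" by (simp add: W0_1)
        have "apply_local 1 V (apply_local 0 M (tri K B' C')) = tri (mm M K) (mm V B') C'"
          by (simp only: apply0 apply1)
        also have "\<dots> = tri (mm (mm (scal alp A) K) (W 0 eps)) (mm B' (W 0 eps)) (mm C' (W 0 (\<lambda>_. 1)))"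
          using e1 e2 e3 by simp
        also have "\<dots> = tri (mm (scal alp A) K) B' C'"
          by (rule sym_tri) (simp add: eps_def)
        finally show "locc_tree G (apply_local 1 V (apply_local 0 M (tri K B' C')))" using leaf by simp
      qed simp
    qed
  qed simp
  have st2: "locc_tree G (tri K B' idm)"
  proof (rule locc_tree.step[of 2 "Lc C"])
    show "kraus_complete (Lc C)" by (rule kraus_C) (auto simp: C1)
    fix M assume "M \<in> set (Lc C)"
    then obtain j where M: "M = scal gam (mm C (W 0 (chi j)))" unfolding Lc_def by auto
    show "locc_tree G (apply_local 2 M (tri K B' idm))"
    proof (rule unit_step[OF unitary_W_cnj[of 0 j], of 0])
      have "apply_local 0 (W 0 (\<lambda>k. cnj (chi j k))) (apply_local 2 M (tri K B' idm))
          = tri (mm (W 0 (\<lambda>k. cnj (chi j k))) K) B' M" by (simp add: apply0 apply2)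
      also have "\<dots> = tri (mm K (W 0 (\<lambda>k. cnj (chi j k)))) (mm B' (W 0 (\<lambda>_. 1))) (mm C' (W 0 (chi j)))"
        unfolding K_def M C'_def by (simp add: mmW_K W0_1 mm_scal_left)
      also have "\<dots> = tri K B' C'"
        by (rule sym_tri) (simp add: chi_unit)
      finally show "locc_tree G (apply_local 0 (W 0 (\<lambda>k. cnj (chi j k))) (apply_local 2 M (tri K B' idm)))"
        using st3 by simp
    qed simp
  qed simp
  have st1: "locc_tree G (tri K idm idm)"
  proof (rule locc_tree.step[of 1 "Lb B"])
    show "kraus_complete (Lb B)" by (rule kraus_B[OF B1])
    fix M assume "M \<in> set (Lb B)"
    then obtain a j where M: "M = scal (bet B) (mm B (W a (chi j)))" unfolding Lb_def by auto
    show "locc_tree G (apply_local 1 M (tri K idm idm))"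
    proof (rule unit_step[OF unitary_W_cnj[of a j], of 0])
      show "locc_tree G (apply_local 0 (W a (\<lambda>k. cnj (chi j k))) (apply_local 1 M (tri K idm idm)))"
      proof (rule unit_step[OF unitary_W1[of a], of 2])
        have "apply_local 2 (W a (\<lambda>_. 1)) (apply_local 0 (W a (\<lambda>k. cnj (chi j k))) (apply_local 1 M (tri K idm idm)))
            = tri (mm (W a (\<lambda>k. cnj (chi j k))) K) M (W a (\<lambda>_. 1))" by (simp only: apply0 apply1 apply2 mm_idm_right)
        also have "\<dots> = tri (mm K (W a (\<lambda>k. cnj (chi j k)))) (mm B' (W a (chi j))) (mm idm (W a (\<lambda>_. 1)))"
          unfolding K_def M B'_def by (simp add: mmW_K mm_scal_left)
        also have "\<dots> = tri K B' idm"
          by (rule sym_tri) (simp add: chi_unit)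
        finally show "locc_tree G (apply_local 2 (W a (\<lambda>_. 1)) (apply_local 0 (W a (\<lambda>k. cnj (chi j k))) (apply_local 1 M (tri K idm idm))))"
          using st2 by simp
      qed simp
    qed simp
  qed simp
  then show ?thesis unfolding G_def K_def GHZ_tri .
qed


definition inner2 :: "(2 \<Rightarrow> complex) \<Rightarrow> (2 \<Rightarrow> complex) \<Rightarrow> complex" where
  "inner2 u v = (\<Sum>x\<in>UNIV. cnj (u x) * v x)"

lemma inner2_eval: "inner2 u v = cnj (u 0) * v 0 + cnj (u 1) * v 1"
  unfolding inner2_def by (rule s2)

lemma normalize2: "\<exists>s u. inner2 u u = 1 \<and> (\<forall>x. v x = s * u x)"
proof (cases "\<forall>x. v x = 0")
  case True
  then show ?thesis
    by (intro exI[of _ 0] exI[of _ "\<lambda>x. if x = 0 then 1 else 0"]) (simp add: inner2_eval d2[symmetric])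
next
  case False
  then obtain x0 where x0: "v x0 \<noteq> 0" by auto
  define N where "N = (\<Sum>x\<in>UNIV. (cmod (v x))\<^sup>2)"
  have "(cmod (v x0))\<^sup>2 \<le> N" unfolding N_def by (rule member_le_sum) auto
  moreover have "(cmod (v x0))\<^sup>2 > 0" using x0 by simp
  ultimately have Npos: "N > 0" by linarith
  have iv: "inner2 v v = complex_of_real N"
    unfolding inner2_def N_def of_real_sum by (simp add: complex_norm_square mult.commute del: of_real_power)
  define s where "s = complex_of_real (sqrt N)"
  have s0: "s \<noteq> 0" using Npos by (simp add: s_def)
  have ss: "cnj s * s = complex_of_real N" unfolding s_def using Npos
    by (simp flip: of_real_mult) 
  show ?thesis
  proof (intro exI[of _ s] exI[of _ "\<lambda>x. v x / s"] conjI allI)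
    have "inner2 (\<lambda>x. v x / s) (\<lambda>x. v x / s) = inner2 v v / (cnj s * s)"
      unfolding inner2_def by (simp add: sum_divide_distrib field_simps)
    then show "inner2 (\<lambda>x. v x / s) (\<lambda>x. v x / s) = 1" using iv ss Npos by simp
    fix x show "v x = s * (v x / s)" using s0 by simp
  qed
qed

lemma rank1:
  fixes P :: "2 \<Rightarrow> 2 \<Rightarrow> complex"
  assumes "P 0 0 * P 1 1 = P 0 1 * P 1 0"
  shows "\<exists>p q. \<forall>x z. P x z = p x * q z"
proof (cases "P 0 0 = 0")
  case False
  show ?thesis
  proof (rule exI[of _ "\<lambda>x. P x 0 / P 0 0"], rule exI[of _ "\<lambda>z. P 0 z"], intro allI)
    fix x z show "P x z = P x 0 / P 0 0 * P 0 z"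
      using ex2[of x] ex2[of z] False assms by (auto simp: field_simps)
  qed
next
  case T: True
  show ?thesis
  proof (cases "P 0 1 = 0")
    case False
    then have "P 1 0 = 0" using T assms by simp
    show ?thesis
    proof (rule exI[of _ "\<lambda>x. P x 1 / P 0 1"], rule exI[of _ "\<lambda>z. P 0 z"], intro allI)
      fix x z show "P x z = P x 1 / P 0 1 * P 0 z"
        using ex2[of x] ex2[of z] False T \<open>P 1 0 = 0\<close> by (auto simp: field_simps)
    qed
  next
    case True
    show ?thesis
    proof (rule exI[of _ "\<lambda>x. if x = 0 then 0 else 1"], rule exI[of _ "\<lambda>z. P 1 z"], intro allI)
      fix x z show "P x z = (if x = 0 then 0 else 1) * P 1 z"
        using ex2[of x] ex2[of z] True T by (auto simp: d2[symmetric])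
    qed
  qed
qed

lemma quad: "\<exists>u v::complex. (u \<noteq> 0 \<or> v \<noteq> 0) \<and> a*u^2 + b*u*v + c*v^2 = 0"
proof (cases "a = 0")
  case True show ?thesis by (rule exI[of _ "1::complex"], rule exI[of _ "0::complex"]) (simp add: True)
next
  case False
  define u where "u = (-b + csqrt (b^2 - 4*a*c)) / (2*a)"
  have "a*u^2 + b*u*1 + c*1^2 = 0"
  proof -
    have "(2*a*u + b)^2 = b^2 - 4*a*c" unfolding u_def using False by (simp add: field_simps)
    then have "4*a*(a*u^2 + b*u + c) = 0" by (simp add: algebra_simps power2_eq_square)
    then show ?thesis using False by simp
  qed
  then have "(u \<noteq> 0 \<or> (1::complex) \<noteq> 0) \<and> a*u^2 + b*u*1 + c*1^2 = 0" by simp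
  then show ?thesis by blast
qed


lemma findg:
  fixes \<phi> :: qubit_state
  shows "\<exists>g. inner2 g g = 1 \<and>
     (\<Sum>y\<in>UNIV. cnj (g y) * \<phi> 0 y 0) * (\<Sum>y\<in>UNIV. cnj (g y) * \<phi> 1 y 1)
   = (\<Sum>y\<in>UNIV. cnj (g y) * \<phi> 0 y 1) * (\<Sum>y\<in>UNIV. cnj (g y) * \<phi> 1 y 0)"
proof -
  define a where "a = \<phi> 0 0 0 * \<phi> 1 0 1 - \<phi> 0 0 1 * \<phi> 1 0 0"
  define b where "b = \<phi> 0 0 0 * \<phi> 1 1 1 + \<phi> 0 1 0 * \<phi> 1 0 1 - \<phi> 0 0 1 * \<phi> 1 1 0 - \<phi> 0 1 1 * \<phi> 1 0 0"
  define c where "c = \<phi> 0 1 0 * \<phi> 1 1 1 - \<phi> 0 1 1 * \<phi> 1 1 0"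
  obtain u v where uv: "u \<noteq> 0 \<or> v \<noteq> 0" and q: "a*u^2 + b*u*v + c*v^2 = 0" using quad[of a b c] by blast
  define r where "r = sqrt ((cmod u)\<^sup>2 + (cmod v)\<^sup>2)"
  have rpos: "(cmod u)\<^sup>2 + (cmod v)\<^sup>2 > 0" using uv by (auto simp: add_pos_nonneg add_nonneg_pos)
  then have r0: "r > 0" unfolding r_def by simp
  define R where "R = complex_of_real r"
  have R0: "R \<noteq> 0" using r0 by (simp add: R_def)
  have RR: "R * R = cnj u * u + cnj v * v"
  proof -
    have "R * R = complex_of_real ((cmod u)\<^sup>2 + (cmod v)\<^sup>2)" unfolding R_def r_def using rpos
      by (simp flip: of_real_mult)
    also have "\<dots> = cnj u * u + cnj v * v"
      by (simp add: complex_norm_square mult.commute del: of_real_power)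
    finally show ?thesis .
  qed
  define g where "g y = (if y = 0 then cnj u else cnj v) / R" for y :: 2
  have g0: "g 0 = cnj u / R" and g1: "g 1 = cnj v / R" unfolding g_def by simp_all
  have cg0: "cnj (g 0) = u / R" and cg1: "cnj (g 1) = v / R" unfolding g0 g1 by (simp_all add: R_def)
  have "inner2 g g = (u * cnj u + v * cnj v) / (R * R)"
    unfolding inner2_eval cg0 cg1 g0 g1 by (simp add: times_divide_times_eq add_divide_distrib R_def)
  also have "\<dots> = 1" using RR R0 by (metis (no_types, lifting) divide_self mult.commute mult_eq_0_iff)
  finally have n: "inner2 g g = 1" .
  have "(\<Sum>y\<in>UNIV. cnj (g y) * \<phi> 0 y 0) * (\<Sum>y\<in>UNIV. cnj (g y) * \<phi> 1 y 1)
      - (\<Sum>y\<in>UNIV. cnj (g y) * \<phi> 0 y 1) * (\<Sum>y\<in>UNIV. cnj (g y) * \<phi> 1 y 0)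
      = (a*u^2 + b*u*v + c*v^2) / (R * R)"
  proof -
    have Pe: "\<And>x z. (\<Sum>y\<in>UNIV. cnj (g y) * \<phi> x y z) = (u * \<phi> x 0 z + v * \<phi> x 1 z) / R"
      unfolding s2 cg0 cg1 by (simp add: add_divide_distrib)
    have num: "(u * \<phi> 0 0 0 + v * \<phi> 0 1 0) * (u * \<phi> 1 0 1 + v * \<phi> 1 1 1)
       - (u * \<phi> 0 0 1 + v * \<phi> 0 1 1) * (u * \<phi> 1 0 0 + v * \<phi> 1 1 0) = a*u^2 + b*u*v + c*v^2"
      unfolding a_def b_def c_def by (simp add: algebra_simps power2_eq_square)
    show ?thesis by (simp only: Pe times_divide_times_eq diff_divide_distrib[symmetric] num)
  qed
  then have "(\<Sum>y\<in>UNIV. cnj (g y) * \<phi> 0 y 0) * (\<Sum>y\<in>UNIV. cnj (g y) * \<phi> 1 y 1)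
      - (\<Sum>y\<in>UNIV. cnj (g y) * \<phi> 0 y 1) * (\<Sum>y\<in>UNIV. cnj (g y) * \<phi> 1 y 0) = 0"
    by (simp only: q) simp
  then show ?thesis using n by (intro exI[of _ g]) (simp only: right_minus_eq)
qed


lemma decomp2:
  fixes \<phi> :: qubit_state
  shows "\<exists>(Ac::3\<Rightarrow>2\<Rightarrow>complex) (Bc::3\<Rightarrow>2\<Rightarrow>complex) (Cc::3\<Rightarrow>2\<Rightarrow>complex) h \<tau>1 \<tau>2. (\<forall>k. inner2 (Ac k) (Ac k) = 1) \<and> inner2 (Ac 1) (Ac 2) = 0 \<and> inner2 (Ac 2) (Ac 1) = 0
     \<and> (\<forall>k. inner2 (Cc k) (Cc k) = 1) \<and> inner2 h h = 1 \<and> inner2 h (Bc 0) = 0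
     \<and> (\<forall>y. Bc 1 y = \<tau>1 * h y) \<and> (\<forall>y. Bc 2 y = \<tau>2 * h y)
     \<and> (\<forall>x y z. (\<Sum>k\<in>UNIV. Ac k x * Bc k y * Cc k z) = \<phi> x y z)"
proof -
  obtain g where gn: "inner2 g g = 1" and gdet:
     "(\<Sum>y\<in>UNIV. cnj (g y) * \<phi> 0 y 0) * (\<Sum>y\<in>UNIV. cnj (g y) * \<phi> 1 y 1)
   = (\<Sum>y\<in>UNIV. cnj (g y) * \<phi> 0 y 1) * (\<Sum>y\<in>UNIV. cnj (g y) * \<phi> 1 y 0)"
    using findg by blast
  define h where "h x = (if x = 0 then - cnj (g 1) else cnj (g 0))" for x :: 2
  have h0: "h 0 = - cnj (g 1)" and h1: "h 1 = cnj (g 0)" unfolding h_def using d2 by auto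
  define P where "P x z = (\<Sum>y\<in>UNIV. cnj (g y) * \<phi> x y z)" for x z
  define Q where "Q x z = (\<Sum>y\<in>UNIV. cnj (h y) * \<phi> x y z)" for x z
  have gn': "cnj (g 0) * g 0 + cnj (g 1) * g 1 = 1" using gn by (simp add: inner2_eval)
  have recon: "\<phi> x y z = g y * P x z + h y * Q x z" for x y z
  proof -
    have y: "y = 0 \<or> y = 1" by (rule ex2)
    have "g 0 * P x z + h 0 * Q x z = (cnj (g 0) * g 0 + cnj (g 1) * g 1) * \<phi> x 0 z"
      unfolding P_def Q_def s2 h0 h1 by (simp add: algebra_simps)
    moreover have "g 1 * P x z + h 1 * Q x z = (cnj (g 0) * g 0 + cnj (g 1) * g 1) * \<phi> x 1 z"
      unfolding P_def Q_def s2 h0 h1 by (simp add: algebra_simps)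
    ultimately show ?thesis using y gn' by auto
  qed
  have hn: "inner2 h h = 1" using gn' by (simp add: inner2_eval h0 h1 mult.commute add.commute)
  have hg: "inner2 h g = 0" by (simp add: inner2_eval h0 h1 mult.commute)
  obtain p q where pq: "\<And>x z. P x z = p x * q z"
    using rank1[of P] gdet unfolding P_def by blast
  obtain sq qh where qh: "inner2 qh qh = 1" "\<And>z. q z = sq * qh z" using normalize2[of q] by blast
  obtain sp ph where ph: "inner2 ph ph = 1" "\<And>z. p z = sp * ph z" using normalize2[of p] by blast
  obtain t0 w0 where w0: "inner2 w0 w0 = 1" "\<And>z. Q 0 z = t0 * w0 z" using normalize2[of "Q 0"] by blast
  obtain t1 w1 where w1: "inner2 w1 w1 = 1" "\<And>z. Q 1 z = t1 * w1 z" using normalize2[of "Q 1"] by blast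
  define d0 where "d0 x = (if x = 0 then 1 else 0::complex)" for x :: 2
  define d1 where "d1 x = (if x = 1 then 1 else 0::complex)" for x :: 2
  have d0v: "d0 0 = 1" "d0 1 = 0" and d1v: "d1 0 = 0" "d1 1 = 1" unfolding d0_def d1_def using d2 by auto
  define Ac where "Ac k = (if k = 0 then ph else if k = 1 then d0 else d1)" for k :: 3
  define Bc where "Bc k = (if k = 0 then (\<lambda>y. (sp * sq) * g y) else if k = 1 then (\<lambda>y. t0 * h y) else (\<lambda>y. t1 * h y))" for k :: 3
  define Cc where "Cc k = (if k = 0 then qh else if k = 1 then w0 else w1)" for k :: 3
  have Av: "Ac 0 = ph" "Ac 1 = d0" "Ac 2 = d1" unfolding Ac_def by auto
  have Bv: "Bc 0 = (\<lambda>y. (sp * sq) * g y)" "Bc 1 = (\<lambda>y. t0 * h y)" "Bc 2 = (\<lambda>y. t1 * h y)" unfolding Bc_def by auto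
  have Cv: "Cc 0 = qh" "Cc 1 = w0" "Cc 2 = w1" unfolding Cc_def by auto
  show ?thesis
  proof (rule exI[of _ Ac], rule exI[of _ Bc], rule exI[of _ Cc], rule exI[of _ h], rule exI[of _ t0], rule exI[of _ t1],
      intro conjI allI)
    fix k :: 3 show "inner2 (Ac k) (Ac k) = 1"
      using ex3[of k] ph by (auto simp: Av inner2_eval d0v d1v)
  next
    show "inner2 (Ac 1) (Ac 2) = 0" "inner2 (Ac 2) (Ac 1) = 0" by (auto simp: Av inner2_eval d0v d1v)
  next
    fix k :: 3 show "inner2 (Cc k) (Cc k) = 1"
      using ex3[of k] qh w0 w1 by (auto simp: Cv)
  next
    show "inner2 h h = 1" by (rule hn)
  next
    show "inner2 h (Bc 0) = 0" using hg by (simp add: Bv inner2_def sum_distrib_left[symmetric] ac_simps)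
  next
    fix y show "Bc 1 y = t0 * h y" by (simp add: Bv)
  next
    fix y show "Bc 2 y = t1 * h y" by (simp add: Bv)
  next
    fix x y z :: 2
    have x: "x = 0 \<or> x = 1" by (rule ex2)
    have "(\<Sum>k\<in>UNIV. Ac k x * Bc k y * Cc k z) = ph x * (sp * sq * g y) * qh z + d0 x * (t0 * h y) * w0 z + d1 x * (t1 * h y) * w1 z"
      by (simp add: s3 Av Bv Cv)
    also have "\<dots> = g y * P x z + h y * Q x z"
    proof -
      have Pxz: "P x z = sp * sq * (ph x * qh z)" using pq ph(2) qh(2) by (simp add: mult_ac)
      show ?thesis using x by (auto simp: Pxz w0(2) w1(2) d0v d1v mult_ac)
    qed
    also have "\<dots> = \<phi> x y z" by (simp add: recon)
    finally show "(\<Sum>k\<in>UNIV. Ac k x * Bc k y * Cc k z) = \<phi> x y z" .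
  qed
qed


definition ext :: "(2 \<Rightarrow> complex) \<Rightarrow> 3 \<Rightarrow> complex" where
  "ext v i = (\<Sum>x\<in>UNIV. if i = emb x then v x else 0)"

lemma ext0[simp]: "ext v 0 = v 0" and ext1[simp]: "ext v 1 = v 1" and ext2[simp]: "ext v 2 = 0"
  unfolding ext_def s2 by simp_all

lemma ext_emb: "ext v (emb x) = v x"
  using ex2[of x] by auto

lemma E1: "(\<Sum>i\<in>UNIV. cnj (ext u i) * ext v i) = inner2 u v"
  unfolding s3 inner2_eval by simp

lemma ext_scal: "ext (\<lambda>y. t * h y) i = t * ext h i"
  using ex3[of i] by auto

lemma ext_sumk: "ext (\<lambda>x. \<Sum>k\<in>UNIV. F k x) i = (\<Sum>k\<in>UNIV. ext (F k) i)"
  using ex3[of i] by auto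
lemma ext_ml: "ext (\<lambda>x. v x * a) i = ext v i * a"
  using ex3[of i] by auto
lemma ext_m3: "ext (\<lambda>x. a * v x * b) i = a * ext v i * b"
  using ex3[of i] by auto

lemma if_sum: "(if P then sum f A else 0) = sum (\<lambda>x. if P then f x else 0) A"
  by simp

lemma emb_eval: "embed_state \<phi> a b c = ext (\<lambda>x. ext (\<lambda>y. ext (\<lambda>z. \<phi> x y z) c) b) a"
  unfolding embed_state_def ext_def if_sum by (intro sum.cong refl) auto

definition hh :: "(3 \<Rightarrow> complex) \<Rightarrow> mat3" where
  "hh u i j = idm i j - 2 * u i * cnj (u j)"

lemma sum_idm1: "(\<Sum>i\<in>UNIV. idm i j * f i) = (f j :: complex)"
proof -
  have eq: "(\<lambda>i. idm i j * f i) = (\<lambda>i. if j = i then f i else 0)" by (auto simp: idm_def)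
  show ?thesis unfolding eq by simp
qed
lemma sum_idm2: "(\<Sum>i\<in>UNIV. f i * idm i j) = (f j :: complex)"
proof -
  have eq: "(\<lambda>i. f i * idm i j) = (\<lambda>i. if j = i then f i else 0)" by (auto simp: idm_def)
  show ?thesis unfolding eq by simp
qed
lemma sum_idm3: "(\<Sum>i\<in>UNIV. f i * idm j i) = (f j :: complex)"
proof -
  have eq: "(\<lambda>i. f i * idm j i) = (\<lambda>i. if j = i then f i else 0)" by (auto simp: idm_def)
  show ?thesis unfolding eq by simp
qed
lemma sum_idm4: "(\<Sum>i\<in>UNIV. idm j i * f i) = (f j :: complex)"
proof -
  have eq: "(\<lambda>i. idm j i * f i) = (\<lambda>i. if j = i then f i else 0)" by (auto simp: idm_def)
  show ?thesis unfolding eq by simp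
qed

lemma unitary_hh:
  assumes "(\<Sum>i\<in>UNIV. cnj (u i) * u i) = 1"
  shows "unitary3 (hh u)"
  unfolding unitary3_def
proof (intro allI)
  fix j l
  have eq: "(\<lambda>i. cnj (hh u i j) * hh u i l) = (\<lambda>i. idm i j * idm i l - 2 * cnj (u l) * (idm i j * u i)
      - 2 * u j * (cnj (u i) * idm i l) + 4 * u j * cnj (u l) * (cnj (u i) * u i))"
    by (auto simp: hh_def idm_def algebra_simps intro!: ext)
  have "(\<Sum>i\<in>UNIV. cnj (hh u i j) * hh u i l) = idm j l - 2 * cnj (u l) * u j - 2 * u j * cnj (u l) + 4 * u j * cnj (u l) * 1"
    unfolding eq using assms
    by (simp add: sum.distrib sum_subtractf sum_distrib_left[symmetric] sum_idm1 sum_idm2)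
  also have "\<dots> = idm j l" by (simp add: algebra_simps)
  finally show "(\<Sum>i\<in>UNIV. cnj (hh u i j) * hh u i l) = (if j = l then 1 else 0)" by (simp add: idm_def)
qed

lemma mm_hh: "mm (hh u) B i k = B i k - 2 * u i * (\<Sum>m\<in>UNIV. cnj (u m) * B m k)"
  unfolding mm_def hh_def by (simp add: algebra_simps sum_subtractf sum_distrib_left sum_idm1 sum_idm2 sum_idm3 sum_idm4)

theorem theorem2:
  fixes \<phi> :: qubit_state
  assumes "normalized_qubit \<phi>"
  shows "LOCC_transformable GHZ3 (embed_state \<phi>)"
proof -
  obtain Ac Bc Cc :: "3 \<Rightarrow> 2 \<Rightarrow> complex" and h :: "2 \<Rightarrow> complex" and t1 t2 where
    hA: "\<And>k. inner2 (Ac k) (Ac k) = 1" "inner2 (Ac 1) (Ac 2) = 0" "inner2 (Ac 2) (Ac 1) = 0"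
    and hC: "\<And>k. inner2 (Cc k) (Cc k) = 1" and hh1: "inner2 h h = 1" and hB0: "inner2 h (Bc 0) = 0"
    and hB1: "\<And>y. Bc 1 y = t1 * h y" and hB2: "\<And>y. Bc 2 y = t2 * h y"
    and hD: "\<And>x y z. (\<Sum>k\<in>UNIV. Ac k x * Bc k y * Cc k z) = \<phi> x y z"
    using decomp2[of \<phi>] by blast
  define A where "A i k = ext (Ac k) i" for i k
  define B where "B i k = ext (Bc k) i" for i k
  define C where "C i k = ext (Cc k) i" for i k
  define V where "V = hh (ext h)"
  have D: "(\<Sum>k\<in>UNIV. A a k * B b k * C c k) = embed_state \<phi> a b c" for a b c
    unfolding emb_eval A_def B_def C_def
    unfolding hD[symmetric] by (simp only: ext_sumk ext_scal ext_ml ext_m3)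
  have B1: "tB B > 0"
  proof (rule ccontr)
    assume "\<not> tB B > 0"
    then have "tB B = 0" unfolding tB_def by (simp add: sum_nonneg not_less order.antisym)
    then have "\<forall>i\<in>UNIV. \<forall>k\<in>UNIV. (cmod (B i k))\<^sup>2 = 0" unfolding tB_def
      by (simp add: sum_nonneg_eq_0_iff sum_nonneg)
    then have B0: "B i k = 0" for i k by simp
    have "\<phi> x y z = 0" for x y z
    proof -
      have "\<phi> x y z = embed_state \<phi> (emb x) (emb y) (emb z)" by (simp add: emb_eval ext_emb)
      also have "\<dots> = 0" unfolding D[symmetric] by (simp add: B0)
      finally show ?thesis .
    qed
    then show False using assms unfolding normalized_qubit_def by simp
  qed
  have V2: "mm V B = mm B (W 0 eps)"
  proof (intro ext)
    fix i k :: 3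
    have inn: "(\<Sum>m\<in>UNIV. cnj (ext h m) * B m k) = inner2 h (Bc k)" unfolding B_def by (rule E1)
    have L: "mm V B i k = B i k - 2 * ext h i * inner2 h (Bc k)" unfolding V_def mm_hh inn by (rule refl)
    have R: "mm B (W 0 eps) i k = B i k * eps k" unfolding mm_W by simp
    have "B i k - 2 * ext h i * inner2 h (Bc k) = B i k * eps k" using ex3[of k]
    proof (elim disjE)
      assume "k = 0" then show ?thesis using hB0 by (simp add: eps_def)
    next
      assume k: "k = 1"
      have "inner2 h (Bc 1) = t1" using hh1 by (simp add: inner2_def hB1 sum_distrib_left[symmetric] ac_simps)
      moreover have "B i 1 = t1 * ext h i"
      proof -
        have "Bc 1 = (\<lambda>y. t1 * h y)" using hB1 by (intro ext) simp
        then show ?thesis unfolding B_def by (simp add: ext_scal)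
      qed
      ultimately show ?thesis using k by (simp add: eps_def)
    next
      assume k: "k = 2"
      have "inner2 h (Bc 2) = t2" using hh1 by (simp add: inner2_def hB2 sum_distrib_left[symmetric] ac_simps)
      moreover have "B i 2 = t2 * ext h i"
      proof -
        have "Bc 2 = (\<lambda>y. t2 * h y)" using hB2 by (intro ext) simp
        then show ?thesis unfolding B_def by (simp add: ext_scal)
      qed
      ultimately show ?thesis using k by (simp add: eps_def)
    qed
    then show "mm V B i k = mm B (W 0 eps) i k" using L R by simp
  qed
  have "locc_tree (GoodS (embed_state \<phi>)) GHZ3"
  proof (rule protocol[of A C V B])
    show "kq A k k = 1" for k unfolding kq_def A_def E1 by (rule hA(1))
    show "kq A 1 2 = 0" unfolding kq_def A_def E1 by (rule hA(2))
    show "kq A 2 1 = 0" unfolding kq_def A_def E1 by (rule hA(3))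
    show "kq C k k = 1" for k unfolding kq_def C_def E1 by (rule hC)
    show "unitary3 V" unfolding V_def by (rule unitary_hh) (simp add: E1 hh1)
    show "mm V B = mm B (W 0 eps)" by (rule V2)
    show "tB B > 0" by (rule B1)
    show "(\<Sum>k\<in>UNIV. A a k * B b k * C c k) = embed_state \<phi> a b c" for a b c by (rule D)
  qed
  then show ?thesis unfolding LOCC_transformable_def GoodS_def .
qed

end
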